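(* Suppose $\Phi$ has type $D_m$ with $m\ge3$, and let $\lambda\in\mathfrak h_K^*$ with $\lambda(p^n\mathfrak h_R)\subseteq R$ be a weight which is not regular integral. Then there exist $\beta_1,\dots,\beta_r\in\Delta$ such that $(s_{\beta_{i-1}}\cdots s_{\beta_1}\cdot\lambda)(h_{\beta_i})\notin\mathbb N_0$ for all $1\le i\le r$, and $s_{\beta_r}\cdots s_{\beta_1}\cdot\lambda\in S_{\mathfrak g}$.
   Context: $\mathfrak g$ is an $\mathcal O_F$-lattice ($F/\mathbb Q_p$ finite, $p$ odd) in a split simple $F$-Lie algebra with Chevalley basis, root system $\Phi$, simple roots $\Delta$, Cartan $\mathfrak h$; $K/F$ finite with ring of integers $R$; $n\in\mathbb N_0$ fixed; $\lambda(h_\alpha)=\langle\lambda,\alpha^\vee\rangle$. Labelling: for $m\ge4$, $\Delta=\{\alpha_1,\dots,\alpha_m\}$ with $\alpha_i$ adjacent to $\alpha_{i+1}$ for $i\le m-2$ and $\alpha_{m-2}$ adjacent to $\alpha_m$ (standard $D_m$ diagram, $\alpha_{m-1},\alpha_m$ the two end nodes at the fork); type $D_3$ means type $A_3$ with simple roots labelled so that $\alpha_1$ is the middle node, adjacent to $\alpha_2$ and $\alpha_3$. $W$ is the Weyl group, $\rho$ half the sum of positive roots, $w\cdot\lambda=w(\lambda+\rho)-\rho$, $\Phi_\lambda=\{\alpha\in\Phi:\langle\lambda+\rho,\alpha^\vee\rangle\in\mathbb Z\}$. $\lambda$ is regular integral if $\langle\lambda+\rho,\alpha^\vee\rangle\in\mathbb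 Z\setminus\{0\}$ for all $\alpha\in\Phi$. A subset of $\Delta$ is connected if its full subgraph of the Dynkin diagram is connected. $S_{\mathfrak g}$ is the set of $\lambda\in\mathfrak h_K^*$ with $\lambda(p^n\mathfrak h_R)\subseteq R$ such that: $\lambda$ is not dominant integral (i.e. not all $\lambda(h_\alpha)\in\mathbb N_0$, $\alpha\in\Delta$); $\Delta\setminus\Phi_\lambda$ is either empty or a connected subset of $\Delta$ containing $\alpha_1$; and $\langle\lambda+\rho,\alpha^\vee\rangle\notin\mathbb Z_{<0}$ for all $\alpha\in\Delta$. *)

theory Defs
  imports "HOL-Computational_Algebra.Primes"
begin

text \<open>For m = 3 this gives
  alpha_1 adjacent to alpha_2 and alpha_3 (the D_3 = A_3 convention of the paper).\<close>

definition D_adj :: "nat \<Rightarrow> nat \<Rightarrow> nat \<Rightarrow> bool" where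
  "D_adj m i j \<longleftrightarrow> i \<in> {1..m} \<and> j \<in> {1..m} \<and>
     ((1 \<le> i \<and> i \<le> m - 2 \<and> j = i + 1) \<or> (1 \<le> j \<and> j \<le> m - 2 \<and> i = j + 1) \<or>
      (i = m - 2 \<and> j = m) \<or> (j = m - 2 \<and> i = m))"

definition D_cartan :: "nat \<Rightarrow> nat \<Rightarrow> nat \<Rightarrow> int" where
  "D_cartan m i j = (if i = j then 2 else if D_adj m i j then -1 else 0)"

definition unit_vec :: "nat \<Rightarrow> nat \<Rightarrow> int" where
  "unit_vec i = (\<lambda>k. if k = i then 1 else 0)"

definition root_refl :: "nat \<Rightarrow> nat \<Rightarrow> (nat \<Rightarrow> int) \<Rightarrow> (nat \<Rightarrow> int)" where
  "root_refl m j \<beta> = (\<lambda>k. \<beta> k - (if k = j then (\<Sum>i\<in>{1..m}. \<beta> i * D_cartan m i j) else 0))"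

text \<open>The root system Phi = W . Delta, in simple-root coordinates.\<close>
inductive_set D_roots :: "nat \<Rightarrow> (nat \<Rightarrow> int) set" for m where
  simple: "i \<in> {1..m} \<Longrightarrow> unit_vec i \<in> D_roots m"
| refl: "\<beta> \<in> D_roots m \<Longrightarrow> j \<in> {1..m} \<Longrightarrow> root_refl m j \<beta> \<in> D_roots m"

text \<open>A weight lambda is encoded by c with c i = lambda(h_{alpha_i}), i in 1..m.
  Since D_m is simply laced, for alpha = sum k_i alpha_i we have
  alpha^vee = sum k_i alpha_i^vee, so <mu, alpha^vee> = sum k_i mu(h_{alpha_i}).\<close>
definition pair_rho :: "nat \<Rightarrow> (nat \<Rightarrow> 'k::field_char_0) \<Rightarrow> (nat \<Rightarrow> int) \<Rightarrow> 'k" where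
  "pair_rho m c \<alpha> = (\<Sum>i\<in>{1..m}. of_int (\<alpha> i) * (c i + 1))"

definition regular_integral :: "nat \<Rightarrow> (nat \<Rightarrow> 'k::field_char_0) \<Rightarrow> bool" where
  "regular_integral m c \<longleftrightarrow> (\<forall>\<alpha>\<in>D_roots m. pair_rho m c \<alpha> \<in> \<int> \<and> pair_rho m c \<alpha> \<noteq> 0)"

definition dot_refl :: "nat \<Rightarrow> nat \<Rightarrow> (nat \<Rightarrow> 'k::field_char_0) \<Rightarrow> (nat \<Rightarrow> 'k)" where
  "dot_refl m j c = (\<lambda>i. c i - (c j + 1) * of_int (D_cartan m j i))"

text \<open>s_{beta_k} ... s_{beta_1} . lambda for the list [beta_1, ..., beta_k].\<close>
definition dot_word :: "nat \<Rightarrow> nat list \<Rightarrow> (nat \<Rightarrow> 'k::field_char_0) \<Rightarrow> (nat \<Rightarrow> 'k)" where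
  "dot_word m bs c = foldl (\<lambda>d j. dot_refl m j d) c bs"

definition integral_cond :: "nat \<Rightarrow> nat \<Rightarrow> nat \<Rightarrow> 'k::field_char_0 set \<Rightarrow> (nat \<Rightarrow> 'k) \<Rightarrow> bool" where
  "integral_cond m p n R c \<longleftrightarrow> (\<forall>i\<in>{1..m}. of_nat p ^ n * c i \<in> R)"

definition D_connected :: "nat \<Rightarrow> nat set \<Rightarrow> bool" where
  "D_connected m S \<longleftrightarrow> S \<subseteq> {1..m} \<and> S \<noteq> {} \<and>
     (\<forall>i\<in>S. \<forall>j\<in>S. (i, j) \<in> {(a, b). a \<in> S \<and> b \<in> S \<and> D_adj m a b}\<^sup>*)"

text \<open>Delta \ Phi_lambda: simple roots alpha_i with <lambda+rho, alpha_i^vee> not integral.\<close>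
definition nonint_simple :: "nat \<Rightarrow> (nat \<Rightarrow> 'k::field_char_0) \<Rightarrow> nat set" where
  "nonint_simple m c = {i\<in>{1..m}. c i + 1 \<notin> \<int>}"

definition S_g :: "nat \<Rightarrow> nat \<Rightarrow> nat \<Rightarrow> 'k::field_char_0 set \<Rightarrow> (nat \<Rightarrow> 'k) set" where
  "S_g m p n R = {c. integral_cond m p n R c
     \<and> \<not> (\<forall>i\<in>{1..m}. c i \<in> \<nat>)
     \<and> (nonint_simple m c = {} \<or> (D_connected m (nonint_simple m c) \<and> 1 \<in> nonint_simple m c))
     \<and> (\<forall>i\<in>{1..m}. \<forall>k::int. k < 0 \<longrightarrow> c i + 1 \<noteq> of_int k)}"

definition subring :: "'k::field_char_0 set \<Rightarrow> bool" where
  "subring R \<longleftrightarrow> 0 \<in> R \<and> 1 \<in> R \<and> (\<forall>x\<in>R. \<forall>y\<in>R. x + y \<in> R \<and> x - y \<in> R \<and> x * y \<in> R)"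

end

theory Submission
  imports Defs "HOL-Library.FuncSet"
begin


lemma D_adj_sym: "D_adj m i j = D_adj m j i"
  unfolding D_adj_def by auto

lemma D_cartan_sym: "D_cartan m i j = D_cartan m j i"
  unfolding D_cartan_def using D_adj_sym by auto

lemma dot_refl_app: "dot_refl m j c i = c i - (c j + 1) * of_int (D_cartan m j i)"
  unfolding dot_refl_def by simp

lemma dot_word_Nil[simp]: "dot_word m [] c = c"
  unfolding dot_word_def by simp

lemma dot_word_Cons[simp]: "dot_word m (j # bs) c = dot_word m bs (dot_refl m j c)"
  unfolding dot_word_def by simp

lemma dot_word_append: "dot_word m (xs @ ys) c = dot_word m ys (dot_word m xs c)"
  unfolding dot_word_def by simp

definition valid :: "nat \<Rightarrow> nat list \<Rightarrow> (nat \<Rightarrow> 'k::field_char_0) \<Rightarrow> bool" where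
  "valid m bs c \<longleftrightarrow> set bs \<subseteq> {1..m} \<and> (\<forall>i<length bs. dot_word m (take i bs) c (bs ! i) \<notin> \<nat>)"

lemma valid_Nil[simp]: "valid m [] c"
  unfolding valid_def by simp

lemma valid_Cons: "valid m (j # bs) c \<longleftrightarrow> j \<in> {1..m} \<and> c j \<notin> \<nat> \<and> valid m bs (dot_refl m j c)"
  unfolding valid_def by (auto simp: less_Suc_eq_0_disj)

lemma valid_append: "valid m (xs @ ys) c \<longleftrightarrow> valid m xs c \<and> valid m ys (dot_word m xs c)"
  by (induction xs arbitrary: c) (auto simp: valid_Cons)

lemma cartan_self[simp]: "D_cartan m j j = 2"
  unfolding D_cartan_def by simp

lemma dot_refl_self: "dot_refl m j c j + 1 = - (c j + 1)"
  unfolding dot_refl_def by (simp add: algebra_simps)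



definition af :: "nat \<Rightarrow> (nat \<Rightarrow> 'k::field_char_0) \<Rightarrow> nat \<Rightarrow> 'k" where
  "af m x i = (if i < m then x i - x (Suc i) else x (m-1) + x m)"

definition xc :: "nat \<Rightarrow> (nat \<Rightarrow> 'k::field_char_0) \<Rightarrow> nat \<Rightarrow> 'k" where
  "xc m c k = (\<Sum>i\<in>{k..<m}. c i + 1) + ((c m + 1) - (c (m-1) + 1)) / 2"

definition tau :: "nat \<Rightarrow> nat \<Rightarrow> nat \<Rightarrow> nat" where
  "tau m j k = (if j < m then (if k = j then Suc j else if k = Suc j then j else k)
               else (if k = m - 1 then m else if k = m then m - 1 else k))"

definition sg :: "nat \<Rightarrow> nat \<Rightarrow> nat \<Rightarrow> 'k::field_char_0" where
  "sg m j k = (if j = m \<and> (k = m - 1 \<or> k = m) then -1 else 1)"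

definition sig :: "nat \<Rightarrow> nat \<Rightarrow> (nat \<Rightarrow> 'k::field_char_0) \<Rightarrow> nat \<Rightarrow> 'k" where
  "sig m j x = (\<lambda>k. sg m j k * x (tau m j k))"

lemma af_xc:
  assumes "1 \<le> i" "i \<le> m" "2 \<le> m"
  shows "af m (xc m c) i = c i + 1"
proof (cases "i < m")
  case True
  then show ?thesis unfolding af_def xc_def by (simp add: sum.atLeast_Suc_lessThan)
next
  case False
  then have "i = m" using assms by simp
  moreover have "{m - 1..<m} = {m-1}" using assms by auto
  ultimately show ?thesis unfolding af_def xc_def by (simp add: field_simps)
qed

lemma xc_unique:
  assumes m2: "2 \<le> m" and h: "\<forall>i\<in>{1..m}. af m y i = b i" and k: "1 \<le> k" "k \<le> m"
  shows "y k = (\<Sum>i\<in>{k..<m}. b i) + (b m - b (m-1)) / 2"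
  using k(2,1)
proof (induction k rule: inc_induct)
  case base
  have e1: "y (m-1) - y m = b (m-1)" using h[rule_format, of "m-1"] m2 by (simp add: af_def)
  have e2: "y (m-1) + y m = b m" using h[rule_format, of m] m2 by (simp add: af_def)
  from e1 e2 have "y m = (b m - b (m-1)) / 2" by (simp add: field_simps)
  then show ?case by simp
next
  case (step n)
  have "y n - y (Suc n) = b n" using h[rule_format, of n] step by (simp add: af_def)
  then show ?case using step by (simp add: sum.atLeast_Suc_lessThan algebra_simps)
qed

lemma af_sig:
  assumes m3: "3 \<le> m" and j: "j \<in> {1..m}" and i: "i \<in> {1..m}"
  shows "af m (sig m j x) i = af m x i - af m x j * of_int (D_cartan m j i)"
proof (cases "j < m")
  case jm: True
  have sx: "sig m j x k = (if k = j then x (Suc j) else if k = Suc j then x j else x k)" for k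
    using jm unfolding sig_def sg_def tau_def by simp
  consider "i = j" | "Suc i = j" | "i = Suc j" "i < m" | "i = m" "j = m - 2" | "i = m" "j = m - 1"
    | "i \<noteq> j" "Suc i \<noteq> j" "i \<noteq> Suc j" "i < m" | "i = m" "j < m - 2"
  proof -
    have "i = j \<or> Suc i = j \<or> (i = Suc j \<and> i < m) \<or> (i = m \<and> j = m-2) \<or> (i = m \<and> j = m-1) \<or> (i \<noteq> j \<and> Suc i \<noteq> j \<and> i \<noteq> Suc j \<and> i < m) \<or> (i = m \<and> j < m-2)"
      using i j jm by auto
    then show ?thesis using that by blast
  qed
  then show ?thesis
  proof cases
    case 1 then show ?thesis using jm by (simp add: af_def sx)
  next
    case 2
    have "D_cartan m j i = -1" using 2 i j jm m3 unfolding D_cartan_def D_adj_def by auto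
    then show ?thesis using 2 jm by (auto simp add: af_def sx)
  next
    case 3
    have "D_cartan m j i = -1" using 3 i j jm m3 unfolding D_cartan_def D_adj_def by auto
    then show ?thesis using 3 jm by (auto simp add: af_def sx)
  next
    case 4
    have A: "D_cartan m j i = -1" using 4 i j jm m3 unfolding D_cartan_def D_adj_def by auto
    have sj: "Suc j = m - 1" using 4 m3 by simp
    have ne: "m - 1 \<noteq> j" "m \<noteq> j" "m \<noteq> Suc j" using 4 m3 by auto
    have "sig m j x (m-1) = x j" using sx[of "m-1"] sj ne by simp
    moreover have "sig m j x m = x m" using sx[of m] ne by simp
    ultimately show ?thesis using 4 jm m3 A sj by (simp add: af_def)
  next
    case 5
    have "D_cartan m j i = 0" using 5 i j jm m3 unfolding D_cartan_def D_adj_def by auto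
    moreover have sj: "Suc j = m" "m - 1 = j" using 5 m3 by auto
    moreover have "sig m j x (m-1) = x m" "sig m j x m = x (m-1)" using sx[of "m-1"] sx[of m] sj by auto
    ultimately show ?thesis using 5(1) by (simp add: af_def)
  next
    case 6
    have "D_cartan m j i = 0" using 6 i j jm m3 unfolding D_cartan_def D_adj_def by auto
    then show ?thesis using 6 jm m3 by (auto simp add: af_def sx)
  next
    case 7
    have "D_cartan m j i = 0" using 7 i j jm m3 unfolding D_cartan_def D_adj_def by auto
    moreover have "m - 1 \<noteq> j" "m - 1 \<noteq> Suc j" "m \<noteq> Suc j" using 7 m3 by auto
    ultimately show ?thesis using 7 jm m3 by (auto simp add: af_def sx)
  qed
next
  case False
  then have jm: "j = m" using j by simp
  have sx: "sig m m x k = (if k = m - 1 then - x m else if k = m then - x (m-1) else x k)" for k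
    using jm m3 unfolding sig_def sg_def tau_def by auto
  consider "i = m" | "i = m - 1" | "i = m - 2" | "i < m - 2"
  proof -
    have "i = m \<or> i = m - 1 \<or> i = m - 2 \<or> i < m - 2" using i by auto
    then show ?thesis using that by blast
  qed
  then show ?thesis
  proof cases
    case 1 then show ?thesis using jm m3 by (simp add: af_def sx)
  next
    case 2
    have "D_cartan m j i = 0" using 2 i j jm m3 unfolding D_cartan_def D_adj_def by auto
    then show ?thesis using 2 jm m3 by (auto simp add: af_def sx)
  next
    case 3
    have "D_cartan m j i = -1" using 3 i j jm m3 unfolding D_cartan_def D_adj_def by auto
    moreover have "Suc (m - 2) = m - 1" using m3 by simp
    ultimately show ?thesis using 3 jm m3 by (auto simp add: af_def sx)
  next
    case 4
    have "D_cartan m j i = 0" using 4 i j jm m3 unfolding D_cartan_def D_adj_def by auto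
    moreover have "Suc i \<noteq> m" "Suc i \<noteq> m - 1" using 4 by auto
    ultimately show ?thesis using 4 jm m3 by (auto simp add: af_def sx)
  qed
qed



lemma xc_dot_refl:
  assumes m3: "3 \<le> m" and j: "j \<in> {1..m}" and k: "k \<in> {1..m}"
  shows "xc m (dot_refl m j c) k = sig m j (xc m c) k"
proof -
  have "\<forall>i\<in>{1..m}. af m (sig m j (xc m c)) i = dot_refl m j c i + 1"
  proof
    fix i assume i: "i \<in> {1..m}"
    have "af m (sig m j (xc m c)) i = af m (xc m c) i - af m (xc m c) j * of_int (D_cartan m j i)"
      using af_sig[OF m3 j i] .
    also have "\<dots> = dot_refl m j c i + 1"
      using af_xc[of i m c] af_xc[of j m c] i j m3 by (simp add: dot_refl_app)
    finally show "af m (sig m j (xc m c)) i = dot_refl m j c i + 1" .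
  qed
  from xc_unique[OF _ this, of k] m3 k
  show ?thesis unfolding xc_def[of m "dot_refl m j c"] by simp
qed

lemma tau_invol: "tau m j (tau m j k) = k"
  unfolding tau_def by auto

lemma tau_range: "2 \<le> m \<Longrightarrow> j \<in> {1..m} \<Longrightarrow> k \<in> {1..m} \<Longrightarrow> tau m j k \<in> {1..m}"
  unfolding tau_def by auto

lemma sg_cases: "sg m j k = 1 \<or> sg m j k = -1"
  unfolding sg_def by auto

lemma pair_rho_dot_refl:
  assumes j: "j \<in> {1..m}"
  shows "pair_rho m (dot_refl m j c) \<beta> = pair_rho m c (root_refl m j \<beta>)"
proof -
  define S where "S = (\<Sum>i\<in>{1..m}. \<beta> i * D_cartan m i j)"
  have S': "(\<Sum>i\<in>{1..m}. of_int (\<beta> i) * of_int (D_cartan m j i)) = (of_int S :: 'a)"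
    unfolding S_def of_int_sum of_int_mult by (rule sum.cong) (simp_all add: D_cartan_sym[of m j])
  have "pair_rho m (dot_refl m j c) \<beta> =
      (\<Sum>i\<in>{1..m}. of_int (\<beta> i) * (c i + 1) - (c j + 1) * (of_int (\<beta> i) * of_int (D_cartan m j i)))"
    unfolding pair_rho_def dot_refl_app by (rule sum.cong) (auto simp: algebra_simps)
  also have "\<dots> = pair_rho m c \<beta> - (c j + 1) * (\<Sum>i\<in>{1..m}. of_int (\<beta> i) * of_int (D_cartan m j i))"
    unfolding pair_rho_def by (simp only: sum_subtractf sum_distrib_left)
  also have "\<dots> = pair_rho m c \<beta> - (c j + 1) * of_int S"
    by (simp only: S')
  also have "\<dots> = pair_rho m c (root_refl m j \<beta>)"
  proof -
    have "pair_rho m c (root_refl m j \<beta>) =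
        (\<Sum>i\<in>{1..m}. of_int (\<beta> i) * (c i + 1) - (if i = j then of_int S * (c j + 1) else 0))"
      unfolding pair_rho_def root_refl_def S_def by (rule sum.cong) (auto simp: algebra_simps)
    also have "\<dots> = pair_rho m c \<beta> - (c j + 1) * of_int S"
      unfolding pair_rho_def using j by (simp add: sum_subtractf sum.delta mult.commute)
    finally show ?thesis by simp
  qed
  finally show ?thesis .
qed

lemma root_refl_invol:
  assumes j: "j \<in> {1..m}"
  shows "root_refl m j (root_refl m j \<beta>) = \<beta>"
proof -
  define S where "S = (\<Sum>i\<in>{1..m}. \<beta> i * D_cartan m i j)"
  have "(\<Sum>i\<in>{1..m}. root_refl m j \<beta> i * D_cartan m i j)
      = (\<Sum>i\<in>{1..m}. \<beta> i * D_cartan m i j - (if i = j then 2 * S else 0))"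
    unfolding root_refl_def S_def by (rule sum.cong) (auto simp: algebra_simps)
  also have "\<dots> = - S" using j by (simp add: sum_subtractf sum.delta S_def)
  finally have e: "(\<Sum>i\<in>{1..m}. root_refl m j \<beta> i * D_cartan m i j) = - S" .
  show ?thesis
  proof
    fix k
    have "root_refl m j (root_refl m j \<beta>) k = root_refl m j \<beta> k - (if k = j then - S else 0)"
      using e unfolding root_refl_def[of m j "root_refl m j \<beta>"] by simp
    also have "\<dots> = \<beta> k" unfolding root_refl_def S_def by simp
    finally show "root_refl m j (root_refl m j \<beta>) k = \<beta> k" .
  qed
qed

lemma regular_integral_dot_refl:
  assumes j: "j \<in> {1..m}" and r: "regular_integral m (dot_refl m j c)"
  shows "regular_integral m c"
  unfolding regular_integral_def
proof
  fix \<alpha> assume a: "\<alpha> \<in> D_roots m"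
  have "root_refl m j \<alpha> \<in> D_roots m" using a j by (rule D_roots.refl)
  then have "pair_rho m (dot_refl m j c) (root_refl m j \<alpha>) \<in> \<int> \<and> pair_rho m (dot_refl m j c) (root_refl m j \<alpha>) \<noteq> 0"
    using r unfolding regular_integral_def by blast
  then show "pair_rho m c \<alpha> \<in> \<int> \<and> pair_rho m c \<alpha> \<noteq> 0"
    unfolding pair_rho_dot_refl[OF j] root_refl_invol[OF j] .
qed

lemma pair_unit: "pair_rho m c (unit_vec i) = c i + 1" if "i \<in> {1..m}"
proof -
  have "pair_rho m c (unit_vec i) = (\<Sum>k\<in>{1..m}. if k = i then c k + 1 else 0)"
    unfolding pair_rho_def unit_vec_def by (rule sum.cong) auto
  then show ?thesis using that by (simp add: sum.delta)
qed

lemma roots_pair: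
  assumes "\<alpha> \<in> D_roots m" and m3: "3 \<le> m"
  shows "\<exists>k l s t. k \<in> {1..m} \<and> l \<in> {1..m} \<and> k \<noteq> l \<and> (s = 1 \<or> s = -1) \<and> (t = 1 \<or> t = -1)
     \<and> pair_rho m c \<alpha> = s * xc m c k + t * xc m c l"
  using assms(1)
proof (induction arbitrary: c rule: D_roots.induct)
  case (simple i)
  show ?case
  proof (cases "i < m")
    case True
    have "pair_rho m c (unit_vec i) = 1 * xc m c i + (-1) * xc m c (Suc i)"
      using pair_unit[OF simple] af_xc[of i m c] simple True m3 by (simp add: af_def)
    then show ?thesis using simple True by (intro exI[of _ i] exI[of _ "Suc i"] exI[of _ 1] exI[of _ "-1"]) auto
  next
    case False
    then have "i = m" using simple by simp
    then have "pair_rho m c (unit_vec i) = 1 * xc m c (m-1) + 1 * xc m c m"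
      using pair_unit[OF simple] af_xc[of i m c] simple m3 by (simp add: af_def)
    then show ?thesis using m3 by (intro exI[of _ "m-1"] exI[of _ m] exI[of _ 1] exI[of _ 1]) auto
  qed
next
  case (refl \<beta> j)
  obtain k l s t where kl: "k \<in> {1..m}" "l \<in> {1..m}" "k \<noteq> l" "s = 1 \<or> s = -1" "t = 1 \<or> t = -1"
    and eq: "pair_rho m (dot_refl m j c) \<beta> = s * xc m (dot_refl m j c) k + t * xc m (dot_refl m j c) l"
    using refl.IH by blast
  have "pair_rho m c (root_refl m j \<beta>) = pair_rho m (dot_refl m j c) \<beta>"
    by (rule pair_rho_dot_refl[OF refl.hyps(2), symmetric])
  also have "\<dots> = s * xc m (dot_refl m j c) k + t * xc m (dot_refl m j c) l" by (rule eq)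
  also have "\<dots> = (s * sg m j k) * xc m c (tau m j k) + (t * sg m j l) * xc m c (tau m j l)"
    unfolding xc_dot_refl[OF m3 refl.hyps(2) kl(1)] xc_dot_refl[OF m3 refl.hyps(2) kl(2)]
    by (simp add: sig_def mult.assoc)
  finally have "pair_rho m c (root_refl m j \<beta>) = (s * sg m j k) * xc m c (tau m j k) + (t * sg m j l) * xc m c (tau m j l)" .
  moreover have "tau m j k \<noteq> tau m j l" using kl(3) tau_invol by metis
  moreover have "s * sg m j k = 1 \<or> s * sg m j k = -1" "t * sg m j l = 1 \<or> t * sg m j l = -1"
    using kl(4,5) sg_cases[of m j k] sg_cases[of m j l] by auto
  ultimately show ?case using tau_range[OF _ refl.hyps(2) kl(1)] tau_range[OF _ refl.hyps(2) kl(2)] m3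
    by (intro exI[of _ "tau m j k"] exI[of _ "tau m j l"] exI[of _ "s * sg m j k"] exI[of _ "t * sg m j l"]) auto
qed



lemma sum_pos_nat:
  assumes "finite A" "A \<noteq> {}" "\<forall>i\<in>A. \<exists>n\<ge>1. f i = (of_nat n :: 'a::semiring_1)"
  shows "\<exists>n\<ge>1. sum f A = of_nat n"
  using assms
proof (induction A rule: finite_ne_induct)
  case (singleton x) then show ?case by simp
next
  case (insert x F)
  then obtain a b where "a \<ge> 1" "f x = of_nat a" "b \<ge> 1" "sum f F = of_nat b" by auto
  then show ?case using insert by (intro exI[of _ "a + b"]) auto
qed

lemma sum_nat0:
  assumes "finite A" "\<forall>i\<in>A. \<exists>n\<ge>1. f i = (of_nat n :: 'a::semiring_1)"
  shows "\<exists>n. sum f A = of_nat n"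
proof (cases "A = {}")
  case True then show ?thesis by (intro exI[of _ 0]) simp
next
  case False then show ?thesis using sum_pos_nat[OF assms(1) _ assms(2)] by blast
qed

lemma xc_diff:
  assumes "k \<le> l" "l \<le> m"
  shows "xc m c k - xc m c l = (\<Sum>i\<in>{k..<l}. c i + 1)"
  unfolding xc_def using sum.atLeastLessThan_concat[OF assms, of "\<lambda>i. c i + 1"] by (simp add: algebra_simps)

lemma xc_plus_m:
  assumes "1 \<le> k" "k < m"
  shows "xc m c k + xc m c m = (\<Sum>i\<in>{k..<m-1}. c i + 1) + (c m + 1)"
proof -
  have "(\<Sum>i\<in>{k..<m}. c i + 1) = (\<Sum>i\<in>{k..<m-1}. c i + 1) + (c (m-1) + 1)"
    using assms sum.atLeastLessThan_Suc[of k "m-1" "\<lambda>i. c i + 1"] by simp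
  then show ?thesis unfolding xc_def by (simp add: field_simps)
qed

lemma dominant_regular:
  fixes c :: "nat \<Rightarrow> 'k::field_char_0"
  assumes m3: "3 \<le> m" and dom: "\<forall>i\<in>{1..m}. c i \<in> \<nat>"
  shows "regular_integral m c"
proof -
  have pa: "\<forall>i\<in>A. \<exists>n\<ge>1. c i + 1 = (of_nat n :: 'k)" if "A \<subseteq> {1..m}" for A
  proof
    fix i assume "i \<in> A"
    then have "c i \<in> \<nat>" using dom that by auto
    then obtain n where "c i = of_nat n" by (auto elim: Nats_cases)
    then show "\<exists>n\<ge>1. c i + 1 = (of_nat n :: 'k)" by (intro exI[of _ "Suc n"]) auto
  qed
  have mi: "\<exists>n\<ge>1. xc m c k - xc m c l = of_nat n" if "1 \<le> k" "k < l" "l \<le> m" for k l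
  proof -
    have "\<exists>n\<ge>1. (\<Sum>i\<in>{k..<l}. c i + 1) = (of_nat n :: 'k)"
      using that by (intro sum_pos_nat pa) auto
    then show ?thesis using xc_diff[of k l m c] that by simp
  qed
  have pm: "\<exists>n\<ge>1. xc m c k + xc m c m = of_nat n" if k1: "1 \<le> k" and km: "k < m" for k
  proof -
    obtain a where a: "(\<Sum>i\<in>{k..<m-1}. c i + 1) = (of_nat a :: 'k)"
    proof -
      have "{k..<m-1} \<subseteq> {1..m}" using k1 km by auto
      from sum_nat0[OF _ pa[OF this]] show ?thesis using that by blast
    qed
    obtain b where "b \<ge> 1" "c m + 1 = (of_nat b :: 'k)" using pa[of "{m}"] m3 by auto
    then show ?thesis unfolding xc_plus_m[OF k1 km] a by (intro exI[of _ "a + b"]) auto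
  qed
  have pl: "\<exists>n\<ge>1. xc m c k + xc m c l = of_nat n" if h: "1 \<le> k" "k < l" "l \<le> m" for k l
  proof (cases "l = m")
    case True then show ?thesis using pm h by simp
  next
    case False
    obtain a b where "a \<ge> 1" "xc m c k - xc m c m = of_nat a" "b \<ge> 1" "xc m c l + xc m c m = of_nat b"
      using mi[of k m] pm[of l] h False by fastforce
    then show ?thesis by (intro exI[of _ "a + b"]) (auto simp: algebra_simps)
  qed
  have key: "s * xc m c k + t * xc m c l \<in> \<int> \<and> s * xc m c k + t * xc m c l \<noteq> 0"
    if h: "1 \<le> k" "k < l" "l \<le> m" "s = 1 \<or> s = -1" "t = 1 \<or> t = -1" for k l s t
  proof -
    obtain a b where a: "a \<ge> 1" "xc m c k - xc m c l = of_nat a" and b: "b \<ge> 1" "xc m c k + xc m c l = of_nat b"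
      using mi[OF h(1-3)] pl[OF h(1-3)] by auto
    have "s * xc m c k + t * xc m c l \<in> {of_nat a, - of_nat a, of_nat b, - of_nat b}"
      using h(4,5) a b by (auto simp: algebra_simps)
    moreover have "(of_nat a :: 'k) \<noteq> 0" "(of_nat b :: 'k) \<noteq> 0" using a b by auto
    ultimately show ?thesis by auto
  qed
  show ?thesis unfolding regular_integral_def
  proof
    fix \<alpha> assume "\<alpha> \<in> D_roots m"
    then obtain k l s t where kl: "k \<in> {1..m}" "l \<in> {1..m}" "k \<noteq> l" "s = 1 \<or> s = -1" "t = 1 \<or> t = -1"
      and eq: "pair_rho m c \<alpha> = s * xc m c k + t * xc m c l"
      using roots_pair[OF _ m3] by blast
    show "pair_rho m c \<alpha> \<in> \<int> \<and> pair_rho m c \<alpha> \<noteq> 0"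
    proof (cases "k < l")
      case True then show ?thesis using key[of k l s t] kl eq by auto
    next
      case False
      then have "l < k" using kl by simp
      then show ?thesis using key[of l k t s] kl eq by (auto simp: add.commute)
    qed
  qed
qed



definition par :: "nat \<Rightarrow> nat \<Rightarrow> nat" where
  "par m i = (if i = m then m - 2 else i - 1)"

definition wt :: "nat \<Rightarrow> nat \<Rightarrow> nat" where
  "wt m i = 2 ^ (m - par m i)"

definition Phi :: "nat \<Rightarrow> (nat \<Rightarrow> 'k::field_char_0) \<Rightarrow> nat" where
  "Phi m c = (\<Sum>i\<in>nonint_simple m c. wt m i)"

definition good :: "nat \<Rightarrow> (nat \<Rightarrow> 'k::field_char_0) \<Rightarrow> bool" where
  "good m c \<longleftrightarrow> nonint_simple m c = {} \<or> (D_connected m (nonint_simple m c) \<and> 1 \<in> nonint_simple m c)"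

lemma par_props:
  assumes m3: "3 \<le> m" and i: "i \<in> {2..m}"
  shows "D_adj m (par m i) i" "D_adj m i (par m i)" "par m i \<in> {1..m}" "par m i < i"
  using assms unfolding par_def D_adj_def by auto

lemma adj_cases: "D_adj m j i \<Longrightarrow> i = par m j \<or> j = par m i"
  unfolding D_adj_def par_def by auto

lemma nonint_sub: "nonint_simple m c \<subseteq> {1..m}"
  unfolding nonint_simple_def by auto

lemma finite_nonint[simp]: "finite (nonint_simple m c)"
  using nonint_sub finite_subset by blast

lemma good_of_closed:
  assumes m3: "3 \<le> m" and sub: "N \<subseteq> {1..m}" and cl: "\<forall>j\<in>N. j \<noteq> 1 \<longrightarrow> par m j \<in> N"
  shows "N = {} \<or> (D_connected m N \<and> 1 \<in> N)"
proof -
  define rel where "rel = {(a, b). a \<in> N \<and> b \<in> N \<and> D_adj m a b}"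
  have claim: "i \<in> N \<longrightarrow> 1 \<in> N \<and> (i, 1) \<in> rel\<^sup>* \<and> (1, i) \<in> rel\<^sup>*" for i
  proof (induction i rule: less_induct)
    case (less i)
    show ?case
    proof
      assume iN: "i \<in> N"
      show "1 \<in> N \<and> (i, 1) \<in> rel\<^sup>* \<and> (1, i) \<in> rel\<^sup>*"
      proof (cases "i = 1")
        case True then show ?thesis using iN by simp
      next
        case False
        then have i2: "i \<in> {2..m}" using iN sub by force
        have pN: "par m i \<in> N" using cl iN False by blast
        from less[OF par_props(4)[OF m3 i2]] pN
        have ih: "1 \<in> N" "(par m i, 1) \<in> rel\<^sup>*" "(1, par m i) \<in> rel\<^sup>*" by auto
        have r1: "(i, par m i) \<in> rel" "(par m i, i) \<in> rel"
          using par_props[OF m3 i2] iN pN unfolding rel_def by auto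
        show ?thesis using ih r1
          by (meson converse_rtrancl_into_rtrancl rtrancl_into_rtrancl)
      qed
    qed
  qed
  show ?thesis
  proof (cases "N = {}")
    case False
    then obtain i where "i \<in> N" by auto
    then have one: "1 \<in> N" using claim by blast
    have "\<forall>i\<in>N. \<forall>j\<in>N. (i, j) \<in> rel\<^sup>*"
      using claim by (meson rtrancl_trans)
    then show ?thesis using one sub False unfolding D_connected_def rel_def by blast
  qed simp
qed

lemma not_good_step:
  assumes m3: "3 \<le> m" and ng: "\<not> good m c"
  shows "\<exists>j\<in>nonint_simple m c. j \<noteq> 1 \<and> par m j \<notin> nonint_simple m c"
  using good_of_closed[OF m3 nonint_sub, of c] ng unfolding good_def by blast

lemma dot_refl_a: "dot_refl m j c i + 1 = (c i + 1) - (c j + 1) * of_int (D_cartan m j i)"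
  by (simp add: dot_refl_app)

lemma phase1_step:
  fixes c :: "nat \<Rightarrow> 'k::field_char_0"
  assumes m3: "3 \<le> m" and jN: "j \<in> nonint_simple m c" and j1: "j \<noteq> 1"
    and pN: "par m j \<notin> nonint_simple m c"
  shows "Phi m c < Phi m (dot_refl m j c)"
proof -
  define N where "N = nonint_simple m c"
  define N' where "N' = nonint_simple m (dot_refl m j c)"
  define p where "p = par m j"
  have j2: "j \<in> {2..m}" using jN j1 unfolding nonint_simple_def by force
  have jnot: "c j + 1 \<notin> \<int>" using jN unfolding nonint_simple_def by auto
  have p1: "p \<in> {1..m}" and adjp: "D_adj m j p" and pj: "p < j"
    using par_props[OF m3 j2] unfolding p_def by auto
  have pint: "c p + 1 \<in> \<int>" using pN p1 unfolding nonint_simple_def p_def by auto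
  have Ajp: "D_cartan m j p = -1" using adjp pj unfolding D_cartan_def by auto
  have pN': "p \<in> N'"
  proof -
    have "dot_refl m j c p + 1 = (c p + 1) + (c j + 1)" using Ajp by (simp add: dot_refl_a)
    moreover have "(c p + 1) + (c j + 1) \<notin> \<int>"
    proof
      assume "(c p + 1) + (c j + 1) \<in> \<int>"
      then have "((c p + 1) + (c j + 1)) - (c p + 1) \<in> \<int>" using pint by (rule Ints_diff)
      then show False using jnot by simp
    qed
    ultimately show ?thesis using p1 unfolding N'_def nonint_simple_def by auto
  qed
  have pnN: "p \<notin> N" using pN unfolding N_def p_def .
  define Ch where "Ch = {i\<in>{1..m}. par m i = j}"
  have diff: "N - N' \<subseteq> Ch"
  proof
    fix i assume i: "i \<in> N - N'"
    then have i1: "i \<in> {1..m}" and ni: "c i + 1 \<notin> \<int>" and ni': "dot_refl m j c i + 1 \<in> \<int>"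
      unfolding N_def N'_def nonint_simple_def by auto
    have ij: "i \<noteq> j"
    proof
      assume "i = j"
      then have "- (c j + 1) \<in> \<int>" using ni' dot_refl_self[of m j c] by simp
      then show False using jnot by (simp add: minus_in_Ints_iff)
    qed
    have "D_cartan m j i \<noteq> 0"
    proof
      assume "D_cartan m j i = 0"
      then show False using ni ni' by (simp add: dot_refl_a)
    qed
    then have "D_adj m j i" using ij unfolding D_cartan_def by (auto split: if_splits)
    then have "i = p \<or> j = par m i" using adj_cases unfolding p_def by blast
    then show "i \<in> Ch" using i pnN i1 unfolding Ch_def by auto
  qed
  have chw: "(\<Sum>i\<in>Ch. wt m i) < wt m p"
  proof (cases "j < m")
    case True
    have Chs: "Ch \<subseteq> {Suc j, m}" unfolding Ch_def par_def by auto
    have "(\<Sum>i\<in>Ch. wt m i) = (\<Sum>i\<in>Ch. 2 ^ (m - j))"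
      by (rule sum.cong) (auto simp: Ch_def wt_def)
    also have "\<dots> = card Ch * 2 ^ (m - j)" by simp
    also have "\<dots> \<le> 2 * 2 ^ (m - j)"
    proof -
      have "card Ch \<le> card {Suc j, m}" using Chs by (intro card_mono) auto
      also have "\<dots> \<le> 2" by (simp add: card_insert_le_m1)
      finally show ?thesis by simp
    qed
    also have "\<dots> < 2 ^ (m - par m p)"
    proof -
      have "par m p = j - 2" using True j2 unfolding p_def par_def by auto
      then have "m - par m p = Suc (Suc (m - j))" using True j2 by auto
      then show ?thesis by simp
    qed
    finally show ?thesis unfolding wt_def by simp
  next
    case False
    then have "Ch = {}" using j2 m3 unfolding Ch_def par_def by auto
    then show ?thesis unfolding wt_def by simp
  qed
  have fin: "finite N" "finite N'" unfolding N_def N'_def by simp_all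
  have "Phi m c = (\<Sum>i\<in>N \<inter> N'. wt m i) + (\<Sum>i\<in>N - N'. wt m i)"
    unfolding Phi_def N_def[symmetric] by (rule sum.Int_Diff[OF fin(1)])
  also have "(\<Sum>i\<in>N - N'. wt m i) \<le> (\<Sum>i\<in>Ch. wt m i)"
    using diff by (intro sum_mono2) (auto simp: Ch_def)
  also have "(\<Sum>i\<in>N \<inter> N'. wt m i) + (\<Sum>i\<in>Ch. wt m i) < (\<Sum>i\<in>N \<inter> N'. wt m i) + wt m p"
    using chw by simp
  also have "\<dots> = (\<Sum>i\<in>insert p (N \<inter> N'). wt m i)" using pnN fin by simp
  also have "\<dots> \<le> Phi m (dot_refl m j c)"
    unfolding Phi_def N'_def[symmetric] using pN' fin by (intro sum_mono2) auto
  finally show ?thesis by simp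
qed

lemma nonint_not_nat: "c j + 1 \<notin> \<int> \<Longrightarrow> c j \<notin> \<nat>"
  using Nats_subset_Ints Ints_add Ints_1 by blast

lemma phase1:
  fixes c :: "nat \<Rightarrow> 'k::field_char_0"
  assumes m3: "3 \<le> m"
  shows "\<exists>bs. valid m bs c \<and> good m (dot_word m bs c)"
proof -
  define B where "B = (\<Sum>i\<in>{1..m}. wt m i)"
  have le: "Phi m d \<le> B" for d :: "nat \<Rightarrow> 'k"
    unfolding Phi_def B_def using nonint_sub by (intro sum_mono2) auto
  have "\<forall>d :: nat \<Rightarrow> 'k. B - Phi m d = K \<longrightarrow> (\<exists>bs. valid m bs d \<and> good m (dot_word m bs d))" for K
  proof (induction K rule: less_induct)
    case (less K)
    show ?case
    proof (intro allI impI)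
      fix d :: "nat \<Rightarrow> 'k" assume K: "B - Phi m d = K"
      show "\<exists>bs. valid m bs d \<and> good m (dot_word m bs d)"
      proof (cases "good m d")
        case True then show ?thesis by (intro exI[of _ "[]"]) simp
      next
        case False
        then obtain j where j: "j \<in> nonint_simple m d" "j \<noteq> 1" "par m j \<notin> nonint_simple m d"
          using not_good_step[OF m3] by blast
        have lt: "Phi m d < Phi m (dot_refl m j d)" using phase1_step[OF m3 j] .
        have "B - Phi m (dot_refl m j d) < K" using lt le[of "dot_refl m j d"] K by simp
        then obtain bs where bs: "valid m bs (dot_refl m j d)" "good m (dot_word m bs (dot_refl m j d))"
          using less by blast
        have "j \<in> {1..m}" "d j \<notin> \<nat>" using j(1) Nats_subset_Ints unfolding nonint_simple_def by auto
        then show ?thesis using bs by (intro exI[of _ "j # bs"]) (simp add: valid_Cons)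
      qed
    qed
  qed
  then show ?thesis by blast
qed



definition H :: "nat \<Rightarrow> (nat \<Rightarrow> 'k::field_char_0) \<Rightarrow> 'k" where
  "H m x = (\<Sum>k\<in>{1..m}. of_nat (m - k) * x k)"

lemma H_sig:
  assumes m3: "3 \<le> m" and j: "j \<in> {1..m}"
  shows "H m (sig m j x) = H m x - af m x j"
proof -
  have d: "H m (sig m j x) - H m x = (\<Sum>k\<in>{1..m}. of_nat (m - k) * (sig m j x k - x k))"
    unfolding H_def by (simp add: sum_subtractf[symmetric] algebra_simps)
  show ?thesis
  proof (cases "j < m")
    case True
    have "(\<Sum>k\<in>{1..m}. of_nat (m - k) * (sig m j x k - x k))
        = (\<Sum>k\<in>{j, Suc j}. of_nat (m - k) * (sig m j x k - x k))"
      using True j by (intro sum.mono_neutral_right) (auto simp: sig_def sg_def tau_def)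
    also have "\<dots> = of_nat (m - j) * (x (Suc j) - x j) + of_nat (m - Suc j) * (x j - x (Suc j))"
      using True by (simp add: sig_def sg_def tau_def)
    also have "\<dots> = - (x j - x (Suc j))"
    proof -
      have "m - j = Suc (m - Suc j)" using True by simp
      then show ?thesis by (simp add: algebra_simps)
    qed
    finally show ?thesis using d True by (simp add: af_def algebra_simps)
  next
    case False
    then have jm: "j = m" using j by simp
    have "(\<Sum>k\<in>{1..m}. of_nat (m - k) * (sig m j x k - x k))
        = (\<Sum>k\<in>{m - 1, m}. of_nat (m - k) * (sig m j x k - x k))"
      using jm m3 by (intro sum.mono_neutral_right) (auto simp: sig_def sg_def tau_def)
    also have "\<dots> = of_nat (m - (m - 1)) * (- x m - x (m - 1)) + of_nat (m - m) * (- x (m-1) - x m)"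
      using jm m3 by (simp add: sig_def sg_def tau_def)
    also have "\<dots> = - (x (m-1) + x m)"
    proof -
      have "m - (m - 1) = 1" using m3 by simp
      then show ?thesis by (simp add: algebra_simps)
    qed
    finally show ?thesis using d jm by (simp add: af_def algebra_simps)
  qed
qed

lemma H_dot:
  assumes m3: "3 \<le> m" and j: "j \<in> {1..m}"
  shows "H m (xc m (dot_refl m j c)) = H m (xc m c) - (c j + 1)"
proof -
  have "H m (xc m (dot_refl m j c)) = H m (sig m j (xc m c))"
    unfolding H_def by (rule sum.cong) (simp_all add: xc_dot_refl[OF m3 j])
  also have "\<dots> = H m (xc m c) - af m (xc m c) j" by (rule H_sig[OF m3 j])
  also have "\<dots> = H m (xc m c) - (c j + 1)" using af_xc[of j m c] j m3 by simp
  finally show ?thesis .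
qed

lemma nonint_int_step:
  assumes "c j + 1 = of_int z"
  shows "nonint_simple m (dot_refl m j c) = nonint_simple m c"
proof -
  have "dot_refl m j c i + 1 \<in> \<int> \<longleftrightarrow> c i + 1 \<in> \<int>" for i
  proof -
    have e: "dot_refl m j c i + 1 = (c i + 1) - of_int (z * D_cartan m j i)"
      using assms by (simp add: dot_refl_a)
    show ?thesis
    proof
      assume "dot_refl m j c i + 1 \<in> \<int>"
      then have "(dot_refl m j c i + 1) + of_int (z * D_cartan m j i) \<in> \<int>" by (intro Ints_add) auto
      then show "c i + 1 \<in> \<int>" using e by simp
    next
      assume "c i + 1 \<in> \<int>"
      then show "dot_refl m j c i + 1 \<in> \<int>" unfolding e by (intro Ints_diff) auto
    qed
  qed
  then show ?thesis unfolding nonint_simple_def by auto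
qed

lemma phase2:
  fixes c0 :: "nat \<Rightarrow> 'k::field_char_0"
  assumes m3: "3 \<le> m"
  shows "\<exists>bs. valid m bs c0 \<and> nonint_simple m (dot_word m bs c0) = nonint_simple m c0
            \<and> (\<forall>i\<in>{1..m}. \<forall>k::int. k < 0 \<longrightarrow> dot_word m bs c0 i + 1 \<noteq> of_int k)"
proof -
  define V0 where "V0 = xc m c0 ` {1..m} \<union> uminus ` xc m c0 ` {1..m}"
  have finV: "finite V0" unfolding V0_def by simp
  have negV: "- v \<in> V0" if "v \<in> V0" for v using that unfolding V0_def by force
  define inv where "inv d \<longleftrightarrow> (\<forall>k\<in>{1..m}. xc m d k \<in> V0)" for d :: "nat \<Rightarrow> 'k"
  have inv0: "inv c0" unfolding inv_def V0_def by auto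
  have inv_step: "inv (dot_refl m j d)" if "inv d" "j \<in> {1..m}" for d j
    unfolding inv_def
  proof
    fix k assume k: "k \<in> {1..m}"
    have tk: "tau m j k \<in> {1..m}" using tau_range[OF _ that(2) k] m3 by simp
    have v: "xc m d (tau m j k) \<in> V0" using that(1) tk unfolding inv_def by blast
    have e: "xc m (dot_refl m j d) k = sg m j k * xc m d (tau m j k)"
      using xc_dot_refl[OF m3 that(2) k, where c = d] unfolding sig_def by simp
    show "xc m (dot_refl m j d) k \<in> V0"
      using sg_cases[of m j k]
    proof (elim disjE)
      assume "sg m j k = (1::'k)" then show ?thesis using e v by simp
    next
      assume "sg m j k = (-1::'k)" then show ?thesis using e negV[OF v] by simp
    qed
  qed
  define HV where "HV = (\<lambda>f. H m f) ` (PiE {1..m} (\<lambda>_. V0))"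
  have finHV: "finite HV" unfolding HV_def using finV by (simp add: finite_PiE)
  have inHV: "H m (xc m d) \<in> HV" if "inv d" for d
  proof -
    have "restrict (xc m d) {1..m} \<in> PiE {1..m} (\<lambda>_. V0)" using that unfolding inv_def by auto
    moreover have "H m (restrict (xc m d) {1..m}) = H m (xc m d)" unfolding H_def by simp
    ultimately show ?thesis unfolding HV_def by (metis image_eqI)
  qed
  define M where "M d = card {h\<in>HV. \<exists>n::nat. n > 0 \<and> h = H m (xc m d) + of_nat n}" for d :: "nat \<Rightarrow> 'k"
  have "\<forall>d. inv d \<longrightarrow> M d = K \<longrightarrow> (\<exists>bs. valid m bs d \<and> nonint_simple m (dot_word m bs d) = nonint_simple m d
            \<and> (\<forall>i\<in>{1..m}. \<forall>k::int. k < 0 \<longrightarrow> dot_word m bs d i + 1 \<noteq> of_int k))" for K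
  proof (induction K rule: less_induct)
    case (less K)
    show ?case
    proof (intro allI impI)
      fix d :: "nat \<Rightarrow> 'k" assume invd: "inv d" and MK: "M d = K"
      show "\<exists>bs. valid m bs d \<and> nonint_simple m (dot_word m bs d) = nonint_simple m d
            \<and> (\<forall>i\<in>{1..m}. \<forall>k::int. k < 0 \<longrightarrow> dot_word m bs d i + 1 \<noteq> of_int k)"
      proof (cases "\<forall>i\<in>{1..m}. \<forall>k::int. k < 0 \<longrightarrow> d i + 1 \<noteq> of_int k")
        case True then show ?thesis by (intro exI[of _ "[]"]) simp
      next
        case False
        then obtain j z where j: "j \<in> {1..m}" and z: "z < 0" "d j + 1 = of_int z" by blast
        define d' where "d' = dot_refl m j d"
        have dnat: "d j \<notin> \<nat>"
        proof
          assume "d j \<in> \<nat>"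
          then obtain q where "d j = of_nat q" by (auto elim: Nats_cases)
          then have "(of_int z :: 'k) = of_int (int q + 1)" using z by simp
          then have "z = int q + 1" by (simp only: of_int_eq_iff)
          then show False using z by simp
        qed
        have Ns: "nonint_simple m d' = nonint_simple m d"
          unfolding d'_def using nonint_int_step[where c = d and j = j, OF z(2)] .
        have invd': "inv d'" unfolding d'_def using inv_step[OF invd j] .
        have Hd': "H m (xc m d') = H m (xc m d) + of_nat (nat (- z))"
          unfolding d'_def H_dot[OF m3 j] z(2) using z(1) by simp
        define A where "A d = {h\<in>HV. \<exists>n::nat. n > 0 \<and> h = H m (xc m d) + of_nat n}" for d :: "nat \<Rightarrow> 'k"
        have sub: "A d' \<subseteq> A d"
        proof
          fix h assume "h \<in> A d'"
          then obtain n where hn: "h \<in> HV" "n > 0" "h = H m (xc m d') + of_nat n" unfolding A_def by blast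
          then have "h = H m (xc m d) + of_nat (nat (- z) + n)" unfolding Hd' by simp
          moreover have "nat (- z) + n > 0" using hn(2) by simp
          ultimately show "h \<in> A d" unfolding A_def using hn(1) by blast
        qed
        have inA: "H m (xc m d') \<in> A d - A d'"
        proof -
          have "H m (xc m d') \<in> HV" using inHV[OF invd'] .
          moreover have "nat (- z) > 0" using z(1) by simp
          ultimately have "H m (xc m d') \<in> A d" unfolding A_def using Hd' by blast
          moreover have "H m (xc m d') \<notin> A d'" unfolding A_def by auto
          ultimately show ?thesis by blast
        qed
        have "card (A d') < card (A d)"
          using sub inA finHV unfolding A_def[of d] by (intro psubset_card_mono) auto
        then have "M d' < K" using MK unfolding M_def A_def by simp
        then obtain bs where bs: "valid m bs d'" "nonint_simple m (dot_word m bs d') = nonint_simple m d'"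
            "\<forall>i\<in>{1..m}. \<forall>k::int. k < 0 \<longrightarrow> dot_word m bs d' i + 1 \<noteq> of_int k"
          using less invd' by blast
        show ?thesis using bs j dnat Ns unfolding d'_def
          by (intro exI[of _ "j # bs"]) (simp add: valid_Cons)
      qed
    qed
  qed
  then show ?thesis using inv0 by blast
qed

lemma of_nat_in_R: "subring R \<Longrightarrow> (of_nat k :: 'k::field_char_0) \<in> R"
  by (induction k) (auto simp: subring_def)

lemma of_int_in_R:
  assumes "subring R" shows "(of_int z :: 'k::field_char_0) \<in> R"
proof (cases z rule: int_cases)
  case (nonneg n) then show ?thesis using of_nat_in_R[OF assms] by simp
next
  case (neg n)
  have "(0::'k) - of_nat (Suc n) \<in> R" using assms of_nat_in_R[OF assms] unfolding subring_def by blast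
  then show ?thesis using neg by simp
qed

lemma integral_step:
  fixes c :: "nat \<Rightarrow> 'k::field_char_0"
  assumes R: "subring R" and j: "j \<in> {1..m}" and ic: "integral_cond m p n R c"
  shows "integral_cond m p n R (dot_refl m j c)"
  unfolding integral_cond_def
proof
  fix i assume i: "i \<in> {1..m}"
  define P where "P = (of_nat p ^ n :: 'k)"
  have PR: "P \<in> R" unfolding P_def using of_nat_in_R[OF R, of "p ^ n"] by simp
  have ci: "P * c i \<in> R" and cj: "P * c j \<in> R" using ic i j unfolding integral_cond_def P_def by auto
  have AR: "(of_int (D_cartan m j i) :: 'k) \<in> R" by (rule of_int_in_R[OF R])
  have "P * dot_refl m j c i = P * c i - (P * c j + P) * of_int (D_cartan m j i)"
    by (simp add: dot_refl_app algebra_simps)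
  moreover have "P * c i - (P * c j + P) * of_int (D_cartan m j i) \<in> R"
    using R ci cj PR AR unfolding subring_def by blast
  ultimately show "of_nat p ^ n * dot_refl m j c i \<in> R" unfolding P_def by simp
qed

lemma integral_word:
  "subring R \<Longrightarrow> set bs \<subseteq> {1..m} \<Longrightarrow> integral_cond m p n R c \<Longrightarrow> integral_cond m p n R (dot_word m bs c)"
  by (induction bs arbitrary: c) (auto simp: integral_step)

lemma regular_word:
  "set bs \<subseteq> {1..m} \<Longrightarrow> regular_integral m (dot_word m bs c) \<Longrightarrow> regular_integral m c"
  by (induction bs arbitrary: c) (auto intro: regular_integral_dot_refl)

theorem proposition3p54:
  fixes m p n :: nat and R :: "'k::field_char_0 set" and c :: "nat \<Rightarrow> 'k"
  assumes "m \<ge> 3"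
    and "prime p" and "odd p"
    and "subring R"
    and "integral_cond m p n R c"
    and "\<not> regular_integral m c"
  shows "\<exists>bs. set bs \<subseteq> {1..m}
           \<and> (\<forall>i<length bs. dot_word m (take i bs) c (bs ! i) \<notin> \<nat>)
           \<and> dot_word m bs c \<in> S_g m p n R"
proof -
  have m3: "3 \<le> m" using assms(1) .
  obtain bs1 where b1: "valid m bs1 c" "good m (dot_word m bs1 c)" using phase1[OF m3] by blast
  define c1 where "c1 = dot_word m bs1 c"
  obtain bs2 where b2: "valid m bs2 c1" "nonint_simple m (dot_word m bs2 c1) = nonint_simple m c1"
      "\<forall>i\<in>{1..m}. \<forall>k::int. k < 0 \<longrightarrow> dot_word m bs2 c1 i + 1 \<noteq> of_int k"
    using phase2[OF m3] by blast
  define bs where "bs = bs1 @ bs2"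
  have cf: "dot_word m bs c = dot_word m bs2 c1" unfolding bs_def c1_def by (simp add: dot_word_append)
  have v: "valid m bs c" unfolding bs_def valid_append c1_def[symmetric] using b1 b2 by simp
  then have sbs: "set bs \<subseteq> {1..m}" unfolding valid_def by simp
  have ic: "integral_cond m p n R (dot_word m bs c)" using integral_word[OF assms(4) sbs assms(5)] .
  have nd: "\<not> (\<forall>i\<in>{1..m}. dot_word m bs c i \<in> \<nat>)"
  proof
    assume "\<forall>i\<in>{1..m}. dot_word m bs c i \<in> \<nat>"
    then have "regular_integral m (dot_word m bs c)" by (rule dominant_regular[OF m3])
    then have "regular_integral m c" by (rule regular_word[OF sbs])
    then show False using assms(6) by simp
  qed
  have g: "good m (dot_word m bs c)"
    using b1(2) b2(2) unfolding cf good_def c1_def[symmetric] by simp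
  have "dot_word m bs c \<in> S_g m p n R"
    unfolding S_g_def using ic nd g b2(3) cf unfolding good_def by simp
  then show ?thesis using v unfolding valid_def by blast
qed

end
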